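(* Let $R$ be an integral domain and let $A$ be an evolution algebra over $R$ with finite basis $x_1,\dots,x_N$ and structure coefficient matrix $C=(c_{ki})_{N\times N}$. Then $A$ is nilpotent if and only if there is a reordering (permutation) of the basis elements $x_1,\dots,x_N$ such that, with respect to this ordering, $C$ is strictly upper triangular (i.e. $c_{ki}=0$ whenever $k\ge i$ in the new ordering).
   Context: An evolution algebra over a commutative ring $R$ is a free $R$-module $A$ with basis $\{x_i\}$ equipped with the $R$-bilinear multiplication determined by $x_ix_j=0$ for $i\ne j$ and $x_i^2=\sum_k c_{ki}x_k$ with $c_{ki}\in R$. The structure coefficient matrix $C$ has $(k,i)$ entry $c_{ki}$, so its $i$-th column consists of the coordinates of $x_i^2$. Powers: $A^1=A$, $A^n=A^{n-1}A$; $A$ is nilpotent if $A^n=(0)$ for some $n$. *)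

theory Defs
  imports Main
begin

text \<open>An evolution algebra of rank N over a commutative ring 'a is modelled on the
free module of coordinate vectors v :: nat \<Rightarrow> 'a supported on {..<N}
(v k is the coefficient of basis element x_k). The structure matrix is
C :: nat \<Rightarrow> nat \<Rightarrow> 'a with C k i = c_ki, i.e. x_i^2 = sum_k c_ki x_k.\<close>

definition evo_space :: "nat \<Rightarrow> (nat \<Rightarrow> 'a::comm_ring_1) set" where
  "evo_space N = {v. \<forall>k\<ge>N. v k = 0}"

definition evo_mult :: "nat \<Rightarrow> (nat \<Rightarrow> nat \<Rightarrow> 'a::comm_ring_1)
    \<Rightarrow> (nat \<Rightarrow> 'a) \<Rightarrow> (nat \<Rightarrow> 'a) \<Rightarrow> (nat \<Rightarrow> 'a)" where
  "evo_mult N C u v = (\<lambda>k. if k < N then (\<Sum>i<N. u i * v i * C k i) else 0)"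

inductive_set lin_span :: "(nat \<Rightarrow> 'a::comm_ring_1) set \<Rightarrow> (nat \<Rightarrow> 'a) set"
  for S :: "(nat \<Rightarrow> 'a) set" where
  zero: "(\<lambda>_. 0) \<in> lin_span S"
| gen: "v \<in> S \<Longrightarrow> v \<in> lin_span S"
| add: "u \<in> lin_span S \<Longrightarrow> v \<in> lin_span S \<Longrightarrow> (\<lambda>k. u k + v k) \<in> lin_span S"
| smult: "v \<in> lin_span S \<Longrightarrow> (\<lambda>k. r * v k) \<in> lin_span S"

text \<open>Powers: A^1 = A, A^(n+1) = A^n A (submodule spanned by products).
  The index 0 is given the value A as a harmless convention.\<close>
fun evo_power :: "nat \<Rightarrow> (nat \<Rightarrow> nat \<Rightarrow> 'a::comm_ring_1) \<Rightarrow> nat \<Rightarrow> (nat \<Rightarrow> 'a) set" where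
  "evo_power N C 0 = evo_space N"
| "evo_power N C (Suc 0) = evo_space N"
| "evo_power N C (Suc (Suc n)) =
     lin_span {evo_mult N C u v | u v. u \<in> evo_power N C (Suc n) \<and> v \<in> evo_space N}"

definition evo_nilpotent :: "nat \<Rightarrow> (nat \<Rightarrow> nat \<Rightarrow> 'a::comm_ring_1) \<Rightarrow> bool" where
  "evo_nilpotent N C \<longleftrightarrow> (\<exists>n\<ge>1. evo_power N C n = {\<lambda>_. 0})"

end

theory Submission
  imports Defs
begin

lemma topo_list:
  fixes C :: "nat \<Rightarrow> nat \<Rightarrow> 'a::idom"
  shows "finite R \<Longrightarrow> card R = n \<Longrightarrow>
    (\<forall>T. T \<subseteq> R \<and> T \<noteq> {} \<longrightarrow> (\<exists>i\<in>T. \<forall>j\<in>T. C j i = 0)) \<Longrightarrow>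
    \<exists>xs. distinct xs \<and> set xs = R \<and>
       (\<forall>k<length xs. \<forall>i<length xs. i \<le> k \<longrightarrow> C (xs ! k) (xs ! i) = 0)"
proof (induction n arbitrary: R)
  case 0
  then show ?case by (intro exI[of _ "[]"]) auto
next
  case (Suc n)
  then have "R \<noteq> {}" by auto
  with Suc.prems(3) obtain i0 where i0: "i0 \<in> R" "\<forall>j\<in>R. C j i0 = 0" by blast
  have "\<exists>xs. distinct xs \<and> set xs = R - {i0} \<and>
       (\<forall>k<length xs. \<forall>i<length xs. i \<le> k \<longrightarrow> C (xs ! k) (xs ! i) = 0)"
    using Suc.prems i0 by (intro Suc.IH) auto
  then obtain xs where xs: "distinct xs" "set xs = R - {i0}"
    "\<forall>k<length xs. \<forall>i<length xs. i \<le> k \<longrightarrow> C (xs ! k) (xs ! i) = 0" by blast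
  show ?case
  proof (intro exI[of _ "i0 # xs"] conjI allI impI)
    show "distinct (i0 # xs)" using xs by auto
    show "set (i0 # xs) = R" using xs i0 by auto
    fix k i assume k: "k < length (i0 # xs)" and i: "i < length (i0 # xs)" and ik: "i \<le> k"
    show "C ((i0 # xs) ! k) ((i0 # xs) ! i) = 0"
    proof (cases i)
      case 0
      have "(i0 # xs) ! k \<in> R" using k xs i0 by (metis \<open>set (i0 # xs) = R\<close> nth_mem)
      then show ?thesis using 0 i0 by simp
    next
      case (Suc i')
      then obtain k' where "k = Suc k'" using ik by (cases k) auto
      then show ?thesis using Suc xs(3) k i ik by auto
    qed
  qed
qed

definition ev :: "nat \<Rightarrow> nat \<Rightarrow> 'a::comm_ring_1" where
  "ev i = (\<lambda>k. if k = i then 1 else 0)"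

lemma nonnil:
  fixes C :: "nat \<Rightarrow> nat \<Rightarrow> 'a::idom"
  assumes T: "T \<subseteq> {..<N}" "T \<noteq> {}" and succ: "\<forall>i\<in>T. \<exists>j\<in>T. C j i \<noteq> 0"
  shows "m \<ge> 1 \<Longrightarrow> \<exists>u\<in>evo_power N C m. \<exists>i\<in>T. u i \<noteq> 0"
proof (induction m)
  case 0 then show ?case by simp
next
  case (Suc m)
  show ?case
  proof (cases m)
    case 0
    from T obtain i where i: "i \<in> T" by blast
    then have "(ev i :: nat \<Rightarrow> 'a) \<in> evo_space N" using T by (auto simp: ev_def evo_space_def)
    then show ?thesis using 0 i by (intro bexI[of _ "ev i"]) (auto simp: ev_def)
  next
    case (Suc m')
    then obtain u i where u: "u \<in> evo_power N C m" "i \<in> T" "u i \<noteq> 0" using Suc.IH by auto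
    obtain j where j: "j \<in> T" "C j i \<noteq> 0" using succ u(2) by blast
    have iN: "i < N" "j < N" using T u(2) j(1) by auto
    have evs: "(ev i :: nat \<Rightarrow> 'a) \<in> evo_space N" using iN by (auto simp: ev_def evo_space_def)
    define w where "w = evo_mult N C u (ev i)"
    have "w \<in> evo_power N C (Suc m)" unfolding w_def using u(1) evs Suc
      by (auto intro!: lin_span.gen)
    moreover have "w j = u i * C j i"
    proof -
      have "w j = (\<Sum>l<N. if l = i then u l * C j l else 0)"
      proof -
        have "\<And>l. u l * ev i l * C j l = (if l = i then u l * C j l else 0)"
          by (simp add: ev_def)
        then show ?thesis unfolding w_def evo_mult_def using iN by simp
      qed
      also have "\<dots> = u i * C j i" using iN by simp
      finally show ?thesis .
    qed
    moreover have "w j \<noteq> 0" using \<open>w j = u i * C j i\<close> j u by simp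
    ultimately show ?thesis using j by blast
  qed
qed

lemma zero_in_power: "(\<lambda>_. 0) \<in> evo_power N C n"
  by (induction N C n rule: evo_power.induct) (auto simp: evo_space_def intro: lin_span.zero)

lemma upper_power:
  fixes C :: "nat \<Rightarrow> nat \<Rightarrow> 'a::idom"
  assumes bij: "bij_betw \<sigma> {..<N} {..<N}"
    and tri: "\<forall>k<N. \<forall>i<N. i \<le> k \<longrightarrow> C (\<sigma> k) (\<sigma> i) = 0"
  shows "u \<in> evo_power N C (Suc m) \<Longrightarrow> u \<in> evo_space N \<and> (\<forall>p<N. N < p + Suc m \<longrightarrow> u (\<sigma> p) = 0)"
proof (induction m arbitrary: u)
  case 0
  then show ?case by simp
next
  case (Suc m)
  from Suc.prems have "u \<in> lin_span {evo_mult N C u v | u v. u \<in> evo_power N C (Suc m) \<and> v \<in> evo_space N}"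
    by simp
  then show ?case
  proof (induction rule: lin_span.induct)
    case zero
    then show ?case by (simp add: evo_space_def)
  next
    case (gen v)
    then obtain a b where v: "v = evo_mult N C a b" and a: "a \<in> evo_power N C (Suc m)"
      and b: "b \<in> evo_space N" by blast
    from Suc.IH[OF a] have IH: "a \<in> evo_space N" "\<forall>p<N. N < p + Suc m \<longrightarrow> a (\<sigma> p) = 0" by auto
    have "v \<in> evo_space N" using v by (simp add: evo_space_def evo_mult_def)
    moreover have "v (\<sigma> p) = 0" if p: "p < N" "N < p + Suc (Suc m)" for p
    proof -
      have sp: "\<sigma> p < N" using bij p(1) by (auto simp: bij_betw_def)
      have "a i * b i * C (\<sigma> p) i = 0" if i: "i < N" for i
      proof -
        obtain q where q: "q < N" "i = \<sigma> q" using bij i by (auto simp: bij_betw_def)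
        show ?thesis
        proof (cases "q \<le> p")
          case True
          then show ?thesis using tri q p by auto
        next
          case False
          then have "a (\<sigma> q) = 0" using IH(2) q p by auto
          then show ?thesis using q by simp
        qed
      qed
      then have "(\<Sum>i<N. a i * b i * C (\<sigma> p) i) = 0" by (intro sum.neutral) auto
      then show ?thesis using v sp by (simp add: evo_mult_def)
    qed
    ultimately show ?case by auto
  next
    case (add u v)
    then show ?case by (simp add: evo_space_def)
  next
    case (smult v r)
    then show ?case by (simp add: evo_space_def)
  qed
qed

theorem theorem2p8:
  fixes C :: "nat \<Rightarrow> nat \<Rightarrow> 'a::idom" and N :: nat
  shows "evo_nilpotent N C \<longleftrightarrow>
    (\<exists>\<sigma>. bij_betw \<sigma> {..<N} {..<N} \<and>
         (\<forall>k<N. \<forall>i<N. i \<le> k \<longrightarrow> C (\<sigma> k) (\<sigma> i) = 0))"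
proof
  assume nil: "evo_nilpotent N C"
  then obtain n where n: "n \<ge> 1" "evo_power N C n = {\<lambda>_. 0}"
    unfolding evo_nilpotent_def by blast
  have P: "\<forall>T. T \<subseteq> {..<N} \<and> T \<noteq> {} \<longrightarrow> (\<exists>i\<in>T. \<forall>j\<in>T. C j i = 0)"
  proof (intro allI impI, rule ccontr)
    fix T assume T: "T \<subseteq> {..<N} \<and> T \<noteq> {}" and c: "\<not> (\<exists>i\<in>T. \<forall>j\<in>T. C j i = 0)"
    then have "\<forall>i\<in>T. \<exists>j\<in>T. C j i \<noteq> 0" by blast
    from nonnil[OF _ _ this n(1)] T obtain u i where "u \<in> evo_power N C n" "u i \<noteq> 0"
      by blast
    with n(2) show False by auto
  qed
  obtain xs where xs: "distinct xs" "set xs = {..<N}"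
    "\<forall>k<length xs. \<forall>i<length xs. i \<le> k \<longrightarrow> C (xs ! k) (xs ! i) = 0"
    using topo_list[OF _ _ P, of N] by auto
  have len: "length xs = N" using xs(1,2) distinct_card by fastforce
  show "\<exists>\<sigma>. bij_betw \<sigma> {..<N} {..<N} \<and>
         (\<forall>k<N. \<forall>i<N. i \<le> k \<longrightarrow> C (\<sigma> k) (\<sigma> i) = 0)"
    using xs len by (intro exI[of _ "(!) xs"] conjI bij_betw_nth) auto
next
  assume "\<exists>\<sigma>. bij_betw \<sigma> {..<N} {..<N} \<and>
         (\<forall>k<N. \<forall>i<N. i \<le> k \<longrightarrow> C (\<sigma> k) (\<sigma> i) = 0)"
  then obtain \<sigma> where bij: "bij_betw \<sigma> {..<N} {..<N}"
    and tri: "\<forall>k<N. \<forall>i<N. i \<le> k \<longrightarrow> C (\<sigma> k) (\<sigma> i) = 0" by blast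
  have "evo_power N C (Suc N) = {\<lambda>_. 0}"
  proof (intro equalityI subsetI)
    fix u assume u: "u \<in> evo_power N C (Suc N)"
    from upper_power[OF bij tri u] have h: "u \<in> evo_space N" "\<forall>p<N. u (\<sigma> p) = 0" by auto
    have "u k = 0" for k
    proof (cases "k < N")
      case True
      then obtain p where "p < N" "k = \<sigma> p" using bij by (auto simp: bij_betw_def)
      then show ?thesis using h by auto
    next
      case False then show ?thesis using h by (auto simp: evo_space_def)
    qed
    then show "u \<in> {\<lambda>_. 0}" by auto
  qed (auto intro: zero_in_power)
  then show "evo_nilpotent N C" unfolding evo_nilpotent_def by (intro exI[of _ "Suc N"]) auto
qed

end
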